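(* Let $M$ and $M'$ be end-decisive MM-QFAs that accept $L$ and $L'$ respectively with bounded positive one-sided error. Then there exists an end-decisive MM-QFA that accepts $L\cap L'$ with bounded positive one-sided error.
   Context: A measure-many quantum finite automaton (MM-QFA) over $\Sigma$ is a tuple $(Q,\Sigma,\{U_\sigma\}_{\sigma\in\Sigma\cup\{\$\}},q_0,Q_{acc},Q_{rej})$ with $Q$ finite indexing an orthonormal basis of $\mathbb{C}^Q$, end-marker $\$\notin\Sigma$, unitary $U_\sigma$, initial state $q_0$, and $Q$ partitioned into $Q_{acc},Q_{rej},Q_{non}$ with orthogonal projections $P_{acc},P_{rej},P_{non}$. On input $x$ it processes $x\$$ maintaining $(\psi,p_{acc},p_{rej})$, initially $(|q_0\rangle,0,0)$; on reading $\sigma$: $\psi'=U_\sigma\psi$, $p_{acc}\mathrel{+}=\|P_{acc}\psi'\|^2$, $p_{rej}\mathrel{+}=\|P_{rej}\psi'\|^2$, $\psi\leftarrow P_{non}\psi'$; the acceptance probability $p(x)$ is the final $p_{acc}$. It is end-decisive if $P_{acc}\psi'=0$ after reading every non-end-marker symbol, on every input. It accepts $L$ with bounded positive one-sided error if there is $c>0$ with $p(x)>c$ for all $x\in L$ and $p(x)=0$ for all $x\notin L$. *)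

theory Defs
  imports Complex_Main "Jordan_Normal_Form.Matrix"
begin

text \<open>The state set Q is represented by the
index set {0..<qdim}; the state space C^Q is the space of complex vectors of
dimension qdim (Jordan_Normal_Form vectors), the basis vector of state q being
unit_vec qdim q. The unitary for a symbol a of the input alphabet is qtrans a,
the unitary for the end-marker is qend. Q_acc and Q_rej are qacc and qrej;
Q_non is the rest of {0..<qdim}.\<close>

record 'a mmqfa =
  qdim :: nat
  qtrans :: "'a \<Rightarrow> complex mat"
  qend :: "complex mat"
  qinit :: nat
  qacc :: "nat set"
  qrej :: "nat set"

definition adjoint_mat :: "complex mat \<Rightarrow> complex mat" where
  "adjoint_mat A = mat (dim_col A) (dim_row A) (\<lambda>(i,j). cnj (A $$ (j,i)))"

definition unitary_mat :: "nat \<Rightarrow> complex mat \<Rightarrow> bool" where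
  "unitary_mat n U \<longleftrightarrow> U \<in> carrier_mat n n \<and> adjoint_mat U * U = 1\<^sub>m n \<and> U * adjoint_mat U = 1\<^sub>m n"

definition mmqfa_wf :: "'a set \<Rightarrow> 'a mmqfa \<Rightarrow> bool" where
  "mmqfa_wf Sig M \<longleftrightarrow>
     qinit M < qdim M \<and>
     qacc M \<subseteq> {..<qdim M} \<and> qrej M \<subseteq> {..<qdim M} \<and> qacc M \<inter> qrej M = {} \<and>
     (\<forall>a\<in>Sig. unitary_mat (qdim M) (qtrans M a)) \<and>
     unitary_mat (qdim M) (qend M)"

definition qnon :: "'a mmqfa \<Rightarrow> nat set" where
  "qnon M = {..<qdim M} - qacc M - qrej M"

definition proj :: "nat set \<Rightarrow> complex vec \<Rightarrow> complex vec" where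
  "proj S v = vec (dim_vec v) (\<lambda>i. if i \<in> S then v $ i else 0)"

definition sqnorm :: "complex vec \<Rightarrow> real" where
  "sqnorm v = (\<Sum>i<dim_vec v. (cmod (v $ i))\<^sup>2)"

definition qstep :: "'a mmqfa \<Rightarrow> complex mat \<Rightarrow> complex vec \<times> real \<times> real \<Rightarrow> complex vec \<times> real \<times> real" where
  "qstep M U st = (case st of (psi, pa, pr) \<Rightarrow>
      let psi' = U *\<^sub>v psi in
      (proj (qnon M) psi', pa + sqnorm (proj (qacc M) psi'), pr + sqnorm (proj (qrej M) psi')))"

definition init_config :: "'a mmqfa \<Rightarrow> complex vec \<times> real \<times> real" where
  "init_config M = (unit_vec (qdim M) (qinit M), 0, 0)"

definition run :: "'a mmqfa \<Rightarrow> 'a list \<Rightarrow> complex vec \<times> real \<times> real" where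
  "run M x = fold (\<lambda>a st. qstep M (qtrans M a) st) x (init_config M)"

definition acc_prob :: "'a mmqfa \<Rightarrow> 'a list \<Rightarrow> real" where
  "acc_prob M x = fst (snd (qstep M (qend M) (run M x)))"

definition end_decisive :: "'a set \<Rightarrow> 'a mmqfa \<Rightarrow> bool" where
  "end_decisive Sig M \<longleftrightarrow>
     (\<forall>x\<in>lists Sig. \<forall>a\<in>Sig.
        proj (qacc M) (qtrans M a *\<^sub>v fst (run M x)) = 0\<^sub>v (qdim M))"

definition accepts_bpos :: "'a set \<Rightarrow> 'a mmqfa \<Rightarrow> 'a list set \<Rightarrow> bool" where
  "accepts_bpos Sig M L \<longleftrightarrow>
     (\<exists>c>0. (\<forall>x\<in>lists Sig. x \<in> L \<longrightarrow> acc_prob M x > c) \<and>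
            (\<forall>x\<in>lists Sig. x \<notin> L \<longrightarrow> acc_prob M x = 0))"

end

theory Submission
  imports Defs
begin

lemma sum_kron:
  fixes f :: "nat \<Rightarrow> nat \<Rightarrow> 'b::comm_monoid_add"
  shows "(\<Sum>k<n*m. f (k div m) (k mod m)) = (\<Sum>i<n. \<Sum>j<m. f i j)"
proof -
  have b: "bij_betw (\<lambda>(i,j). i*m+j) ({..<n}\<times>{..<m}) {..<n*m}"
  proof (rule bij_betwI[where g="\<lambda>k. (k div m, k mod m)"])
    show "(\<lambda>(i,j). i*m+j) \<in> {..<n}\<times>{..<m} \<rightarrow> {..<n*m}"
    proof
      fix x assume "x \<in> {..<n}\<times>{..<m}"
      then obtain i j where x: "x=(i,j)" "i<n" "j<m" by auto
      have "i*m+j < i*m+m" using x by simp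
      also have "\<dots> = (i+1)*m" by simp
      also have "\<dots> \<le> n*m" using x by (intro mult_right_mono) auto
      finally show "(\<lambda>(i,j). i*m+j) x \<in> {..<n*m}" using x by simp
    qed
    show "(\<lambda>k. (k div m, k mod m)) \<in> {..<n*m} \<rightarrow> {..<n}\<times>{..<m}"
      by (auto simp: less_mult_imp_div_less) (metis mod_less_divisor mult_0_right not_gr_zero not_less_zero)
  qed auto
  have "(\<Sum>k<n*m. f (k div m) (k mod m)) = (\<Sum>x\<in>{..<n}\<times>{..<m}. f (fst x) (snd x))"
    unfolding sum.reindex_bij_betw[OF b, of "\<lambda>k. f (k div m) (k mod m)", symmetric]
    by (rule sum.cong) auto
  also have "\<dots> = (\<Sum>i<n. \<Sum>j<m. f i j)" by (simp add: sum.cartesian_product case_prod_beta)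
  finally show ?thesis .
qed


definition kron :: "complex mat \<Rightarrow> complex mat \<Rightarrow> complex mat" where
  "kron A B = mat (dim_row A * dim_row B) (dim_col A * dim_col B)
     (\<lambda>(i,j). A $$ (i div dim_row B, j div dim_col B) * B $$ (i mod dim_row B, j mod dim_col B))"

definition kv :: "complex vec \<Rightarrow> complex vec \<Rightarrow> complex vec" where
  "kv v w = vec (dim_vec v * dim_vec w) (\<lambda>k. v $ (k div dim_vec w) * w $ (k mod dim_vec w))"

lemma div_lt: "k < n * (m::nat) \<Longrightarrow> k div m < n"
  by (simp add: less_mult_imp_div_less)
lemma mod_lt: "k < n * (m::nat) \<Longrightarrow> k mod m < m"
  by (metis mod_less_divisor mult_0_right not_gr_zero not_less_zero)

lemma kron_mult_vec:
  assumes "A \<in> carrier_mat n n" "B \<in> carrier_mat m m" "dim_vec v = n" "dim_vec w = m"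
  shows "kron A B *\<^sub>v kv v w = kv (A *\<^sub>v v) (B *\<^sub>v w)"
proof (rule eq_vecI)
  show "dim_vec (kron A B *\<^sub>v kv v w) = dim_vec (kv (A *\<^sub>v v) (B *\<^sub>v w))"
    using assms by (simp add: kron_def kv_def)
  fix k assume "k < dim_vec (kv (A *\<^sub>v v) (B *\<^sub>v w))"
  hence k: "k < n*m" using assms by (simp add: kv_def)
  have "(kron A B *\<^sub>v kv v w) $ k = (\<Sum>t<n*m. A $$ (k div m, t div m) * B $$ (k mod m, t mod m) * (v $ (t div m) * w $ (t mod m)))"
    using assms k by (simp add: kron_def kv_def mult_mat_vec_def scalar_prod_def atLeast0LessThan row_def)
  also have "\<dots> = (\<Sum>i<n. \<Sum>j<m. A $$ (k div m, i) * B $$ (k mod m, j) * (v $ i * w $ j))"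
    by (rule sum_kron)
  also have "\<dots> = (\<Sum>i<n. A $$ (k div m, i) * v $ i) * (\<Sum>j<m. B $$ (k mod m, j) * w $ j)"
    by (simp add: sum_product algebra_simps)
  also have "\<dots> = kv (A *\<^sub>v v) (B *\<^sub>v w) $ k"
    using assms k div_lt[OF k] mod_lt[OF k]
    by (simp add: kv_def mult_mat_vec_def scalar_prod_def atLeast0LessThan row_def)
  finally show "(kron A B *\<^sub>v kv v w) $ k = kv (A *\<^sub>v v) (B *\<^sub>v w) $ k" .
qed

lemma kron_mult:
  assumes "A \<in> carrier_mat n n" "B \<in> carrier_mat m m" "C \<in> carrier_mat n n" "D \<in> carrier_mat m m"
  shows "kron A B * kron C D = kron (A * C) (B * D)"
proof (rule eq_matI)
  fix i j assume "i < dim_row (kron (A * C) (B * D))" "j < dim_col (kron (A * C) (B * D))"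
  hence i: "i < n*m" and j: "j < n*m" using assms by (auto simp: kron_def)
  have "(kron A B * kron C D) $$ (i,j) = (\<Sum>t<n*m. A $$ (i div m, t div m) * B $$ (i mod m, t mod m) * (C $$ (t div m, j div m) * D $$ (t mod m, j mod m)))"
    using assms i j by (simp add: kron_def times_mat_def scalar_prod_def atLeast0LessThan row_def col_def)
  also have "\<dots> = (\<Sum>a<n. \<Sum>b<m. A $$ (i div m, a) * B $$ (i mod m, b) * (C $$ (a, j div m) * D $$ (b, j mod m)))"
    by (rule sum_kron)
  also have "\<dots> = (\<Sum>a<n. A $$ (i div m, a) * C $$ (a, j div m)) * (\<Sum>b<m. B $$ (i mod m, b) * D $$ (b, j mod m))"
    by (simp add: sum_product algebra_simps)
  also have "\<dots> = kron (A * C) (B * D) $$ (i,j)"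
    using assms i j div_lt[OF i] mod_lt[OF i] div_lt[OF j] mod_lt[OF j]
    by (simp add: kron_def times_mat_def scalar_prod_def atLeast0LessThan row_def col_def)
  finally show "(kron A B * kron C D) $$ (i,j) = kron (A * C) (B * D) $$ (i,j)" .
qed (use assms in \<open>auto simp: kron_def\<close>)

lemma kron_one: "kron (1\<^sub>m n) (1\<^sub>m m) = 1\<^sub>m (n*m)"
proof (rule eq_matI)
  fix i j assume "i < dim_row (1\<^sub>m (n*m))" "j < dim_col (1\<^sub>m (n*m))"
  hence i: "i < n*m" and j: "j < n*m" by auto
  have "(i div m = j div m \<and> i mod m = j mod m) = (i = j)"
    by (metis div_mult_mod_eq)
  thus "kron (1\<^sub>m n) (1\<^sub>m m) $$ (i,j) = 1\<^sub>m (n*m) $$ (i,j)"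
    using i j div_lt[OF i] mod_lt[OF i] div_lt[OF j] mod_lt[OF j]
    by (auto simp: kron_def)
qed (auto simp: kron_def)

lemma adjoint_kron: "adjoint_mat (kron A B) = kron (adjoint_mat A) (adjoint_mat B)"
proof (rule eq_matI)
  fix i j assume "i < dim_row (kron (adjoint_mat A) (adjoint_mat B))" "j < dim_col (kron (adjoint_mat A) (adjoint_mat B))"
  hence i: "i < dim_col A * dim_col B" and j: "j < dim_row A * dim_row B" by (auto simp: kron_def adjoint_mat_def)
  show "adjoint_mat (kron A B) $$ (i,j) = kron (adjoint_mat A) (adjoint_mat B) $$ (i,j)"
    using i j div_lt[OF i] mod_lt[OF i] div_lt[OF j] mod_lt[OF j]
    by (simp add: kron_def adjoint_mat_def)
qed (auto simp: kron_def adjoint_mat_def)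

lemma unitary_kron:
  assumes "unitary_mat n A" "unitary_mat m B"
  shows "unitary_mat (n*m) (kron A B)"
proof -
  have c: "A \<in> carrier_mat n n" "B \<in> carrier_mat m m" using assms by (auto simp: unitary_mat_def)
  have ca: "adjoint_mat A \<in> carrier_mat n n" "adjoint_mat B \<in> carrier_mat m m"
    using c by (auto simp: adjoint_mat_def)
  have k: "kron A B \<in> carrier_mat (n*m) (n*m)" using c by (auto simp: kron_def)
  show ?thesis using assms c ca k
    unfolding unitary_mat_def adjoint_kron
    by (simp add: kron_mult kron_one)
qed

lemma proj_kv:
  assumes "dim_vec w = m" "\<And>k. k < dim_vec v * m \<Longrightarrow> (k \<in> S) = (k div m \<in> A \<and> k mod m \<in> B)"
  shows "proj S (kv v w) = kv (proj A v) (proj B w)"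
  using assms div_lt mod_lt by (auto simp: proj_def kv_def intro!: eq_vecI)

lemma sqnorm_kv: "sqnorm (kv v w) = sqnorm v * sqnorm w"
  unfolding sqnorm_def kv_def
  by (simp add: sum_kron[where f="\<lambda>i j. (cmod (v $ i))\<^sup>2 * (cmod (w $ j))\<^sup>2"] norm_mult power_mult_distrib sum_product)

lemma unit_kv:
  assumes "q < n" "q' < m"
  shows "unit_vec (n*m) (q*m+q') = kv (unit_vec n q) (unit_vec m q')"
proof (rule eq_vecI)
  fix k assume "k < dim_vec (kv (unit_vec n q) (unit_vec m q'))"
  hence k: "k < n*m" by (simp add: kv_def)
  have "(k = q*m+q') = (k div m = q \<and> k mod m = q')" using assms
    by (metis add.commute div_mult_mod_eq mod_mult_self2 mod_less div_mult_self1 div_less add_0_right not_less_zero mult.commute gr_implies_not0 less_nat_zero_code)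
  thus "unit_vec (n*m) (q*m+q') $ k = kv (unit_vec n q) (unit_vec m q') $ k"
    using k div_lt[OF k] mod_lt[OF k] by (auto simp: kv_def unit_vec_def)
qed (simp add: kv_def)



lemma run_snoc: "run M (xs @ [a]) = qstep M (qtrans M a) (run M xs)"
  by (simp add: run_def)

lemma qstep_fst: "fst (qstep M U (psi, pa, pr)) = proj (qnon M) (U *\<^sub>v psi)"
  by (simp add: qstep_def Let_def)
lemma qstep_pa: "fst (snd (qstep M U (psi, pa, pr))) = pa + sqnorm (proj (qacc M) (U *\<^sub>v psi))"
  by (simp add: qstep_def Let_def)

lemma sqnorm_zero[simp]: "sqnorm (0\<^sub>v n) = 0"
  by (simp add: sqnorm_def)

lemma kv_zero: "kv (0\<^sub>v n) w = 0\<^sub>v (n * dim_vec w)"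
  proof (rule eq_vecI)
  fix i assume "i < dim_vec (0\<^sub>v (n * dim_vec w))"
  hence "i < n * dim_vec w" by simp
  hence "i div dim_vec w < n" by (rule div_lt)
  thus "kv (0\<^sub>v n) w $ i = 0\<^sub>v (n * dim_vec w) $ i" using \<open>i < n * dim_vec w\<close> by (simp add: kv_def)
qed (simp add: kv_def)

lemma unitary_carrier: "unitary_mat n U \<Longrightarrow> U \<in> carrier_mat n n"
  unfolding unitary_mat_def by (elim conjE)

lemma wf_trans_carrier: "mmqfa_wf Sig M \<Longrightarrow> a \<in> Sig \<Longrightarrow> qtrans M a \<in> carrier_mat (qdim M) (qdim M)"
  unfolding mmqfa_wf_def using unitary_carrier by blast
lemma wf_end_carrier: "mmqfa_wf Sig M \<Longrightarrow> qend M \<in> carrier_mat (qdim M) (qdim M)"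
  unfolding mmqfa_wf_def using unitary_carrier by blast

lemma run_dim:
  assumes "mmqfa_wf Sig M" "x \<in> lists Sig"
  shows "dim_vec (fst (run M x)) = qdim M"
  using assms(2)
proof (induction x rule: rev_induct)
  case Nil thus ?case using assms(1) by (simp add: run_def init_config_def)
next
  case (snoc a xs)
  have "a \<in> Sig" using snoc.prems by simp
  hence "unitary_mat (qdim M) (qtrans M a)" using assms(1) unfolding mmqfa_wf_def by blast
  hence d: "dim_row (qtrans M a) = qdim M" by (metis unitary_carrier carrier_matD(1))
  obtain p pa pr where r: "run M xs = (p, pa, pr)" by (cases "run M xs")
  have "fst (run M (xs @ [a])) = proj (qnon M) (qtrans M a *\<^sub>v p)"
    by (simp only: run_snoc r qstep_fst)
  moreover have "dim_vec (proj (qnon M) (qtrans M a *\<^sub>v p)) = qdim M" using d by (simp add: proj_def)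
  ultimately show ?case by simp
qed

lemma run_pa:
  assumes "mmqfa_wf Sig M" "end_decisive Sig M" "x \<in> lists Sig"
  shows "fst (snd (run M x)) = 0"
  using assms(3)
proof (induction x rule: rev_induct)
  case Nil thus ?case by (simp add: run_def init_config_def)
next
  case (snoc a xs)
  hence "xs \<in> lists Sig" "a \<in> Sig" by auto
  hence "proj (qacc M) (qtrans M a *\<^sub>v fst (run M xs)) = 0\<^sub>v (qdim M)"
    using assms(2) by (simp add: end_decisive_def)
  thus ?case using snoc by (cases "run M xs") (simp add: run_snoc qstep_pa)
qed

lemma acc_prob_eq:
  assumes "mmqfa_wf Sig M" "end_decisive Sig M" "x \<in> lists Sig"
  shows "acc_prob M x = sqnorm (proj (qacc M) (qend M *\<^sub>v fst (run M x)))"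
  using run_pa[OF assms] by (cases "run M x") (simp add: acc_prob_def qstep_pa)

definition prodQ :: "'a mmqfa \<Rightarrow> 'a mmqfa \<Rightarrow> 'a mmqfa" where
  "prodQ M M' = \<lparr> qdim = qdim M * qdim M',
     qtrans = (\<lambda>a. kron (qtrans M a) (qtrans M' a)),
     qend = kron (qend M) (qend M'),
     qinit = qinit M * qdim M' + qinit M',
     qacc = {k. k < qdim M * qdim M' \<and> k div qdim M' \<in> qacc M \<and> k mod qdim M' \<in> qacc M'},
     qrej = {k. k < qdim M * qdim M' \<and> \<not> (k div qdim M' \<in> qnon M \<and> k mod qdim M' \<in> qnon M')
              \<and> \<not> (k div qdim M' \<in> qacc M \<and> k mod qdim M' \<in> qacc M')} \<rparr>"

lemma prodQ_non: "qnon (prodQ M M') = {k. k < qdim M * qdim M' \<and> k div qdim M' \<in> qnon M \<and> k mod qdim M' \<in> qnon M'}"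
  by (auto simp: qnon_def prodQ_def)

lemma prodQ_wf:
  assumes "mmqfa_wf Sig M" "mmqfa_wf Sig M'"
  shows "mmqfa_wf Sig (prodQ M M')"
proof -
  have "qinit M * qdim M' + qinit M' < qdim M * qdim M'"
  proof -
    have "qinit M * qdim M' + qinit M' < qinit M * qdim M' + qdim M'" using assms by (simp add: mmqfa_wf_def)
    also have "\<dots> = (qinit M + 1) * qdim M'" by simp
    also have "\<dots> \<le> qdim M * qdim M'" using assms by (intro mult_right_mono) (auto simp: mmqfa_wf_def)
    finally show ?thesis .
  qed
  thus ?thesis using assms unfolding mmqfa_wf_def
    by (auto simp: prodQ_def qnon_def intro!: unitary_kron)
qed

lemma prodQ_run:
  assumes "mmqfa_wf Sig M" "mmqfa_wf Sig M'" "x \<in> lists Sig"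
  shows "fst (run (prodQ M M') x) = kv (fst (run M x)) (fst (run M' x))"
  using assms(3)
proof (induction x rule: rev_induct)
  case Nil
  have q: "qinit M < qdim M" "qinit M' < qdim M'" using assms(1,2) unfolding mmqfa_wf_def by blast+
  show ?case using unit_kv[OF q]
    by (simp add: run_def init_config_def prodQ_def)
next
  case (snoc a xs)
  hence xs: "xs \<in> lists Sig" and a: "a \<in> Sig" by auto
  have U: "qtrans M a \<in> carrier_mat (qdim M) (qdim M)" "qtrans M' a \<in> carrier_mat (qdim M') (qdim M')"
    using wf_trans_carrier[OF assms(1) a] wf_trans_carrier[OF assms(2) a] by auto
  obtain p pa pr where r: "run (prodQ M M') xs = (p, pa, pr)" by (cases "run (prodQ M M') xs")
  obtain q qa qr where r1: "run M xs = (q, qa, qr)" by (cases "run M xs")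
  obtain q' qa' qr' where r2: "run M' xs = (q', qa', qr')" by (cases "run M' xs")
  have dq: "dim_vec q = qdim M" "dim_vec q' = qdim M'"
    using run_dim[OF assms(1) xs] run_dim[OF assms(2) xs] r1 r2 by auto
  have p: "p = kv q q'" using snoc.IH xs r r1 r2 by simp
  have "fst (run (prodQ M M') (xs @ [a])) = proj (qnon (prodQ M M')) (kron (qtrans M a) (qtrans M' a) *\<^sub>v kv q q')"
    by (simp add: run_snoc r qstep_fst p) (simp add: prodQ_def)
  also have "\<dots> = proj (qnon (prodQ M M')) (kv (qtrans M a *\<^sub>v q) (qtrans M' a *\<^sub>v q'))"
    using kron_mult_vec[OF U dq] by simp
  also have "\<dots> = kv (proj (qnon M) (qtrans M a *\<^sub>v q)) (proj (qnon M') (qtrans M' a *\<^sub>v q'))"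
    using U by (intro proj_kv) (auto simp: prodQ_non)
  also have "\<dots> = kv (fst (run M (xs @ [a]))) (fst (run M' (xs @ [a])))"
    by (simp add: run_snoc r1 r2 qstep_fst)
  finally show ?case .
qed

lemma prodQ_ed:
  assumes "mmqfa_wf Sig M" "mmqfa_wf Sig M'" "end_decisive Sig M" "end_decisive Sig M'"
  shows "end_decisive Sig (prodQ M M')"
  unfolding end_decisive_def
proof (intro ballI)
  fix x a assume x: "x \<in> lists Sig" and a: "a \<in> Sig"
  have U: "qtrans M a \<in> carrier_mat (qdim M) (qdim M)" "qtrans M' a \<in> carrier_mat (qdim M') (qdim M')"
    using wf_trans_carrier[OF assms(1) a] wf_trans_carrier[OF assms(2) a] by auto
  have dq: "dim_vec (fst (run M x)) = qdim M" "dim_vec (fst (run M' x)) = qdim M'"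
    using run_dim[OF assms(1) x] run_dim[OF assms(2) x] by auto
  have z: "proj (qacc M) (qtrans M a *\<^sub>v fst (run M x)) = 0\<^sub>v (qdim M)"
    using assms(3) x a by (simp add: end_decisive_def)
  have "proj (qacc (prodQ M M')) (qtrans (prodQ M M') a *\<^sub>v fst (run (prodQ M M') x))
     = proj (qacc (prodQ M M')) (kv (qtrans M a *\<^sub>v fst (run M x)) (qtrans M' a *\<^sub>v fst (run M' x)))"
    using prodQ_run[OF assms(1,2) x] kron_mult_vec[OF U dq] by (simp add: prodQ_def)
  also have "\<dots> = kv (proj (qacc M) (qtrans M a *\<^sub>v fst (run M x))) (proj (qacc M') (qtrans M' a *\<^sub>v fst (run M' x)))"
    using U by (intro proj_kv) (auto simp: prodQ_def)
  also have "\<dots> = 0\<^sub>v (qdim (prodQ M M'))"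
    unfolding z using U dq by (simp add: kv_zero prodQ_def proj_def)
  finally show "proj (qacc (prodQ M M')) (qtrans (prodQ M M') a *\<^sub>v fst (run (prodQ M M') x)) = 0\<^sub>v (qdim (prodQ M M'))" .
qed

lemma prodQ_acc:
  assumes "mmqfa_wf Sig M" "mmqfa_wf Sig M'" "end_decisive Sig M" "end_decisive Sig M'" "x \<in> lists Sig"
  shows "acc_prob (prodQ M M') x = acc_prob M x * acc_prob M' x"
proof -
  have U: "qend M \<in> carrier_mat (qdim M) (qdim M)" "qend M' \<in> carrier_mat (qdim M') (qdim M')"
    using wf_end_carrier[OF assms(1)] wf_end_carrier[OF assms(2)] by auto
  have dq: "dim_vec (fst (run M x)) = qdim M" "dim_vec (fst (run M' x)) = qdim M'"
    using run_dim[OF assms(1) assms(5)] run_dim[OF assms(2) assms(5)] by auto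
  have "acc_prob (prodQ M M') x = sqnorm (proj (qacc (prodQ M M')) (qend (prodQ M M') *\<^sub>v fst (run (prodQ M M') x)))"
    using acc_prob_eq[OF prodQ_wf[OF assms(1,2)] prodQ_ed[OF assms(1-4)] assms(5)] .
  also have "\<dots> = sqnorm (proj (qacc (prodQ M M')) (kv (qend M *\<^sub>v fst (run M x)) (qend M' *\<^sub>v fst (run M' x))))"
    using prodQ_run[OF assms(1,2,5)] kron_mult_vec[OF U dq] by (simp add: prodQ_def)
  also have "\<dots> = sqnorm (kv (proj (qacc M) (qend M *\<^sub>v fst (run M x))) (proj (qacc M') (qend M' *\<^sub>v fst (run M' x))))"
    using U by (subst proj_kv) (auto simp: prodQ_def)
  also have "\<dots> = acc_prob M x * acc_prob M' x"
    by (simp add: sqnorm_kv acc_prob_eq[OF assms(1,3,5)] acc_prob_eq[OF assms(2,4,5)])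
  finally show ?thesis .
qed


theorem corollary4p9:
  fixes Sig :: "'a set" and M M' :: "'a mmqfa" and L L' :: "'a list set"
  assumes "finite Sig"
    and "L \<subseteq> lists Sig" and "L' \<subseteq> lists Sig"
    and "mmqfa_wf Sig M" and "end_decisive Sig M" and "accepts_bpos Sig M L"
    and "mmqfa_wf Sig M'" and "end_decisive Sig M'" and "accepts_bpos Sig M' L'"
  shows "\<exists>N :: 'a mmqfa. mmqfa_wf Sig N \<and> end_decisive Sig N \<and>
           accepts_bpos Sig N (L \<inter> L')"
proof (intro exI conjI)
  show "mmqfa_wf Sig (prodQ M M')" using prodQ_wf assms by blast
  show "end_decisive Sig (prodQ M M')" using prodQ_ed assms by blast
  obtain c where c: "c > 0" "\<forall>x\<in>lists Sig. x \<in> L \<longrightarrow> acc_prob M x > c"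
      "\<forall>x\<in>lists Sig. x \<notin> L \<longrightarrow> acc_prob M x = 0"
    using assms(6) unfolding accepts_bpos_def by blast
  obtain c' where c': "c' > 0" "\<forall>x\<in>lists Sig. x \<in> L' \<longrightarrow> acc_prob M' x > c'"
      "\<forall>x\<in>lists Sig. x \<notin> L' \<longrightarrow> acc_prob M' x = 0"
    using assms(9) unfolding accepts_bpos_def by blast
  have P: "acc_prob (prodQ M M') x = acc_prob M x * acc_prob M' x" if "x \<in> lists Sig" for x
    using prodQ_acc[OF assms(4,7,5,8) that] .
  show "accepts_bpos Sig (prodQ M M') (L \<inter> L')"
    unfolding accepts_bpos_def
  proof (intro exI[of _ "c * c'"] conjI ballI impI)
    show "0 < c * c'" using c c' by simp
    fix x assume x: "x \<in> lists Sig"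
    { assume "x \<in> L \<inter> L'"
      hence "acc_prob M x > c" "acc_prob M' x > c'" using c c' x by auto
      hence "acc_prob M x * acc_prob M' x > c * c'" using c c'
        by (intro mult_strict_mono) auto
      thus "acc_prob (prodQ M M') x > c * c'" using P[OF x] by simp }
    { assume "x \<notin> L \<inter> L'"
      hence "acc_prob M x = 0 \<or> acc_prob M' x = 0" using c c' x by auto
      thus "acc_prob (prodQ M M') x = 0" using P[OF x] by auto }
  qed
qed

end
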